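(* Let $d\ge1$, let $M$ be a $d\times d$ integer matrix with all eigenvalues of modulus $>1$, and let $P$ be a $d\times d$ integer matrix with $p:=|\det P|\neq0$ that is an admissible oversampling matrix for $M$. Then every $g\in H$ can be written uniquely as $$g=\sum_{r=0}^{p-1}\mathbf{T}'_{P\theta_r}S'f_r$$ for some $f_0,\dots,f_{p-1}\in L^2(\mathbb{R}^d)$.
   Context: $P$ is admissible for $M$ if $PMP^{-1}$ has integer entries and $M^{-1}\mathbb{Z}^d\cap P^{-1}\mathbb{Z}^d=\mathbb{Z}^d$. $T_uf(x)=f(x-u)$. Let $\{\theta_r:0\le r\le p-1\}$ be a complete set of representatives of $P^{-1}\mathbb{Z}^d/\mathbb{Z}^d$ with $\theta_0=0$ (so $P\theta_r\in\mathbb{Z}^d$), and $\{\theta^*_q:0\le q\le p-1\}$ a complete set of representatives of $(P^* )^{-1}\mathbb{Z}^d/\mathbb{Z}^d$ with $\theta^*_0=0$ ($P^*$ the transpose). $H=L^2(\mathbb{R}^d)^{\oplus p}$ with elements $(f_q)_{0\le q\le p-1}$. For $k\in\mathbb{Z}^d$, $\mathbf{T}'_k(f_q)_q=(e^{2\pi ik\cdot\theta^*_q}T_kf_q)_q$. For $f\in L^2(\mathbb{R}^d)$, $S'f=\frac1p\big(f(P^{-1}\cdot),\dots,f(P^{-1}\cdot)\big)\in H$ (an isometry). *)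

theory Defs
  imports "HOL-Analysis.Analysis"
begin

text \<open>The integer lattice Z^d inside R^d (vectors indexed by the finite type 'd).\<close>
definition Zd :: "(real ^ 'd) set" where
  "Zd = {x. \<forall>i. x $ i \<in> \<int>}"

definition int_mat :: "real ^ 'd ^ 'd \<Rightarrow> bool" where
  "int_mat A \<longleftrightarrow> (\<forall>i j. A $ i $ j \<in> \<int>)"

text \<open>Complexification of a real matrix.\<close>
definition cmat :: "real ^ 'd ^ 'd \<Rightarrow> complex ^ 'd ^ 'd" where
  "cmat A = (\<chi> i j. complex_of_real (A $ i $ j))"

text \<open>All (complex) eigenvalues of M have modulus > 1.\<close>
definition eigenvalues_gt1 :: "real ^ 'd ^ 'd \<Rightarrow> bool" where
  "eigenvalues_gt1 M \<longleftrightarrow> (\<forall>z::complex. det (mat z - cmat M) = 0 \<longrightarrow> 1 < cmod z)"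

text \<open>P admissible for M: P M P^{-1} integer and M^{-1}Z^d \<inter> P^{-1}Z^d = Z^d
  (preimages, M and P being invertible).\<close>
definition admissible :: "real ^ 'd ^ 'd \<Rightarrow> real ^ 'd ^ 'd \<Rightarrow> bool" where
  "admissible P M \<longleftrightarrow> int_mat (P ** M ** matrix_inv P) \<and>
     {x. M *v x \<in> Zd} \<inter> {x. P *v x \<in> Zd} = Zd"

text \<open>theta_0,...,theta_{p-1} is a complete set of representatives of A/Z^d with theta_0 = 0.\<close>
definition complete_reps :: "(real ^ 'd) set \<Rightarrow> nat \<Rightarrow> (nat \<Rightarrow> real ^ 'd) \<Rightarrow> bool" where
  "complete_reps A p \<theta> \<longleftrightarrow> \<theta> 0 = 0 \<and> (\<forall>r<p. \<theta> r \<in> A) \<and>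
     (\<forall>x\<in>A. \<exists>!r. r < p \<and> x - \<theta> r \<in> Zd)"

text \<open>Membership in L^2(R^d) (complex valued, Lebesgue measure).\<close>
definition L2 :: "(real ^ 'd \<Rightarrow> complex) \<Rightarrow> bool" where
  "L2 f \<longleftrightarrow> f \<in> borel_measurable lebesgue \<and> integrable lebesgue (\<lambda>x. (cmod (f x))\<^sup>2)"

text \<open>Elements of H = L^2(R^d)^p, represented as families indexed by q < p.\<close>
definition inH :: "nat \<Rightarrow> (nat \<Rightarrow> real ^ 'd \<Rightarrow> complex) \<Rightarrow> bool" where
  "inH p g \<longleftrightarrow> (\<forall>q<p. L2 (g q))"

text \<open>Equality in H (almost everywhere in each component).\<close>
definition Heq :: "nat \<Rightarrow> (nat \<Rightarrow> real ^ 'd \<Rightarrow> complex) \<Rightarrow> (nat \<Rightarrow> real ^ 'd \<Rightarrow> complex) \<Rightarrow> bool" where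
  "Heq p g h \<longleftrightarrow> (\<forall>q<p. AE x in lebesgue. g q x = h q x)"

definition transl :: "real ^ 'd \<Rightarrow> (real ^ 'd \<Rightarrow> complex) \<Rightarrow> real ^ 'd \<Rightarrow> complex" where
  "transl u f = (\<lambda>x. f (x - u))"

text \<open>T'_k (f_q)_q = (e^{2 pi i k.theta*_q} T_k f_q)_q.\<close>
definition Tprime :: "(nat \<Rightarrow> real ^ 'd) \<Rightarrow> real ^ 'd \<Rightarrow> (nat \<Rightarrow> real ^ 'd \<Rightarrow> complex)
    \<Rightarrow> (nat \<Rightarrow> real ^ 'd \<Rightarrow> complex)" where
  "Tprime \<theta>s k g = (\<lambda>q x. exp (2 * pi * \<i> * complex_of_real (k \<bullet> \<theta>s q)) * transl k (g q) x)"

text \<open>S'f = (1/p)(f(P^{-1} .), ..., f(P^{-1} .)).\<close>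
definition Sprime :: "real ^ 'd ^ 'd \<Rightarrow> nat \<Rightarrow> (real ^ 'd \<Rightarrow> complex) \<Rightarrow> (nat \<Rightarrow> real ^ 'd \<Rightarrow> complex)" where
  "Sprime P p f = (\<lambda>q x. (1 / of_nat p) * f (matrix_inv P *v x))"

text \<open>The synthesis map (f_r)_r \<mapsto> sum_{r<p} T'_{P theta_r} S' f_r.\<close>
definition synth :: "real ^ 'd ^ 'd \<Rightarrow> nat \<Rightarrow> (nat \<Rightarrow> real ^ 'd) \<Rightarrow> (nat \<Rightarrow> real ^ 'd)
    \<Rightarrow> (nat \<Rightarrow> real ^ 'd \<Rightarrow> complex) \<Rightarrow> (nat \<Rightarrow> real ^ 'd \<Rightarrow> complex)" where
  "synth P p \<theta> \<theta>s f = (\<lambda>q x. \<Sum>r<p. Tprime \<theta>s (P *v \<theta> r) (Sprime P p (f r)) q x)"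

end

theory Submission
  imports Defs
begin


lemma lin_image_scale:
  fixes f :: "real^'n \<Rightarrow> real^'n"
  assumes "linear f"
  shows "\<exists>c\<ge>0. \<forall>S \<in> lmeasurable. f ` S \<in> lmeasurable \<and> measure lebesgue (f ` S) = c * measure lebesgue S"
proof (rule induct_linear_elementary [OF \<open>linear f\<close>])
  fix f g :: "real^'n \<Rightarrow> real^'n"
  assume "linear f" and "linear g"
    and f: "\<exists>c\<ge>0. \<forall>S \<in> lmeasurable. f ` S \<in> lmeasurable \<and> measure lebesgue (f ` S) = c * measure lebesgue S"
    and g: "\<exists>c\<ge>0. \<forall>S \<in> lmeasurable. g ` S \<in> lmeasurable \<and> measure lebesgue (g ` S) = c * measure lebesgue S"
  from f obtain a where a: "a \<ge> 0" "\<forall>S \<in> lmeasurable. f ` S \<in> lmeasurable \<and> measure lebesgue (f ` S) = a * measure lebesgue S" by blast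
  from g obtain b where b: "b \<ge> 0" "\<forall>S \<in> lmeasurable. g ` S \<in> lmeasurable \<and> measure lebesgue (g ` S) = b * measure lebesgue S" by blast
  show "\<exists>c\<ge>0. \<forall>S \<in> lmeasurable. (f \<circ> g) ` S \<in> lmeasurable \<and> measure lebesgue ((f \<circ> g) ` S) = c * measure lebesgue S"
  proof (intro exI[of _ "a*b"] conjI ballI)
    fix S :: "(real^'n) set" assume S: "S \<in> lmeasurable"
    have "(f \<circ> g) ` S = f ` (g ` S)" by (simp add: image_comp)
    then show "(f \<circ> g) ` S \<in> lmeasurable" "measure lebesgue ((f \<circ> g) ` S) = a * b * measure lebesgue S"
      using a(2) b(2) S by auto
  qed (use a b in auto)
next
  fix f :: "real^'n \<Rightarrow> real^'n" and i
  assume "linear f" and 0: "\<And>x. f x $ i = 0"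
  then have "\<not> inj f"
    by (metis (full_types) linear_injective_imp_surjective one_neq_zero surjE vec_component)
  show "\<exists>c\<ge>0. \<forall>S \<in> lmeasurable. f ` S \<in> lmeasurable \<and> measure lebesgue (f ` S) = c * measure lebesgue S"
  proof (intro exI[of _ 0] conjI ballI)
    fix S :: "(real^'n) set"
    show "f ` S \<in> lmeasurable"
      using lmeasurable_iff_indicator_has_integral \<open>linear f\<close> \<open>\<not> inj f\<close> negligible_UNIV negligible_linear_singular_image by blast
    show "measure lebesgue (f ` S) = 0 * measure lebesgue S"
      by (simp add: \<open>\<not> inj f\<close> \<open>linear f\<close> negligible_imp_measure0 negligible_linear_singular_image)
  qed simp
next
  fix c :: "'n \<Rightarrow> real"
  show "\<exists>d\<ge>0. \<forall>S \<in> lmeasurable. (\<lambda>a. \<chi> i. c i * a $ i) ` S \<in> lmeasurable \<and> measure lebesgue ((\<lambda>a. \<chi> i. c i * a $ i) ` S) = d * measure lebesgue S"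
    by (intro exI[of _ "\<bar>prod c UNIV\<bar>"]) (auto simp: measurable_stretch measure_stretch)
next
  fix m n :: "'n"
  assume "m \<noteq> n"
  let ?h = "\<lambda>v::(real, 'n) vec. \<chi> i. v $ Transposition.transpose m n i"
  have lin: "linear ?h"
    by (rule linearI) (simp_all add: plus_vec_def scaleR_vec_def)
  have meq: "measure lebesgue ((\<lambda>v::(real, 'n) vec. \<chi> i. v $ Transposition.transpose m n i) ` cbox a b)
           = 1 * measure lebesgue (cbox a b)" for a b
  proof (cases "cbox a b = {}")
    case True then show ?thesis
      by simp
  next
    case False
    then have him: "?h ` (cbox a b) \<noteq> {}"
      by blast
    have eq: "?h ` (cbox a b) = cbox (?h a) (?h b)"
      by (auto simp: image_iff lambda_swap_Galois mem_box_cart) (metis transpose_involutory)+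
    show ?thesis
      using him prod.permute [OF permutes_swap_id, where S=UNIV and g="\<lambda>i. (b - a)$i", symmetric]
      by (simp add: eq content_cbox_cart False)
  qed
  show "\<exists>c\<ge>0. \<forall>S \<in> lmeasurable. ?h ` S \<in> lmeasurable \<and> measure lebesgue (?h ` S) = c * measure lebesgue S"
  proof (intro exI[of _ 1] conjI ballI)
    fix S :: "(real^'n) set" assume S: "S \<in> lmeasurable"
    from measure_linear_sufficient [OF lin S meq]
    show "?h ` S \<in> lmeasurable" "measure lebesgue (?h ` S) = 1 * measure lebesgue S" by simp_all
  qed simp
next
  fix m n :: "'n"
  assume "m \<noteq> n"
  let ?h = "\<lambda>v::(real, 'n) vec. \<chi> i. if i = m then v $ m + v $ n else v $ i"
  have lin: "linear ?h"
    by (rule linearI) (auto simp: algebra_simps plus_vec_def scaleR_vec_def vec_eq_iff)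
  have meq: "measure lebesgue (?h ` (cbox a b)) = 1 * measure lebesgue (cbox a b)" for a b
  proof (cases "cbox a b = {}")
    case True then show ?thesis by simp
  next
    case False
    then have ne: "(+) (\<chi> i. if i = n then - a $ n else 0) ` cbox a b \<noteq> {}"
      by auto
    let ?v = "\<chi> i. if i = n then - a $ n else 0"
    have "?h ` cbox a b
          = (+) (\<chi> i. if i = m \<or> i = n then a $ n else 0) ` ?h ` (+) ?v ` (cbox a b)"
      using \<open>m \<noteq> n\<close> unfolding image_comp o_def by (force simp: vec_eq_iff)
    then have "measure lebesgue (?h ` (cbox a b))
             = measure lebesgue ((\<lambda>v. \<chi> i. if i = m then v $ m + v $ n else v $ i) `
                                 (+) ?v ` cbox a b)"
      by (rule ssubst) (rule measure_translation)
    also have "\<dots> = measure lebesgue ((\<lambda>v. \<chi> i. if i = m then v $ m + v $ n else v $ i) ` cbox (?v +a) (?v + b))"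
      by (metis (no_types, lifting) cbox_translation)
    also have "\<dots> = measure lebesgue ((+) ?v ` cbox a b)"
      apply (subst measure_shear_interval)
      using \<open>m \<noteq> n\<close> ne apply auto
      apply (simp add: cbox_translation)
      by (metis cbox_borel cbox_translation measure_completion sets_lborel)
    also have "\<dots> = measure lebesgue (cbox a b)"
      by (rule measure_translation)
    finally show ?thesis by simp
  qed
  show "\<exists>c\<ge>0. \<forall>S \<in> lmeasurable. ?h ` S \<in> lmeasurable \<and> measure lebesgue (?h ` S) = c * measure lebesgue S"
  proof (intro exI[of _ 1] conjI ballI)
    fix S :: "(real^'n) set" assume S: "S \<in> lmeasurable"
    from measure_linear_sufficient [OF lin S meq]
    show "?h ` S \<in> lmeasurable" "measure lebesgue (?h ` S) = 1 * measure lebesgue S" by simp_all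
  qed simp
qed

lemma lin_image_emeasure:
  fixes f :: "real^'n \<Rightarrow> real^'n"
  assumes "linear f"
  shows "\<exists>c\<ge>0. \<forall>S\<in>sets lebesgue. f ` S \<in> sets lebesgue \<and> emeasure lebesgue (f ` S) = ennreal c * emeasure lebesgue S"
proof -
  obtain c where c: "c \<ge> 0" "\<forall>S\<in>lmeasurable. f ` S \<in> lmeasurable \<and> measure lebesgue (f ` S) = c * measure lebesgue S"
    using lin_image_scale[OF assms] by blast
  show ?thesis
  proof (intro exI[of _ c] conjI ballI)
    fix S :: "(real^'n) set" assume S: "S \<in> sets lebesgue"
    define B where "B n = S \<inter> cball 0 (real n)" for n :: nat
    have B: "B n \<in> lmeasurable" for n
      unfolding B_def by (intro bounded_set_imp_lmeasurable) (auto simp: S bounded_Int)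
    have fB: "f ` B n \<in> lmeasurable" and mB: "measure lebesgue (f ` B n) = c * measure lebesgue (B n)" for n
      using c B by auto
    have US: "(\<Union>n. B n) = S"
    proof
      show "(\<Union>n. B n) \<subseteq> S" unfolding B_def by auto
      show "S \<subseteq> (\<Union>n. B n)"
      proof
        fix x assume "x \<in> S"
        obtain n where "norm x \<le> real n" using real_arch_simple by blast
        then show "x \<in> (\<Union>n. B n)" using \<open>x \<in> S\<close> unfolding B_def by auto
      qed
    qed
    have fU: "f ` S = (\<Union>n. f ` B n)" using US by auto
    show "f ` S \<in> sets lebesgue" unfolding fU using fB by (auto simp: fmeasurable_def)
    have inc: "incseq B" unfolding B_def incseq_def by auto
    have incf: "incseq (\<lambda>n. f ` B n)" using inc by (auto simp: incseq_def image_mono)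
    have "emeasure lebesgue (f ` S) = (SUP n. emeasure lebesgue (f ` B n))"
      unfolding fU by (rule SUP_emeasure_incseq[symmetric]) (use fB incf in \<open>auto simp: fmeasurable_def\<close>)
    also have "\<dots> = (SUP n. ennreal c * emeasure lebesgue (B n))"
      using fB B mB c(1) by (simp add: emeasure_eq_measure2 ennreal_mult)
    also have "\<dots> = ennreal c * (SUP n. emeasure lebesgue (B n))"
      by (simp add: SUP_mult_left_ennreal)
    also have "(SUP n. emeasure lebesgue (B n)) = emeasure lebesgue S"
      unfolding US[symmetric] by (rule SUP_emeasure_incseq) (use B inc in \<open>auto simp: fmeasurable_def\<close>)
    finally show "emeasure lebesgue (f ` S) = ennreal c * emeasure lebesgue S" .
  qed (rule c(1))
qed

lemma invertible_inv:
  fixes L :: "real^'n^'n"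
  assumes "invertible L"
  shows "L ** matrix_inv L = mat 1" "matrix_inv L ** L = mat 1"
  using someI_ex[OF assms[unfolded invertible_def]] unfolding matrix_inv_def by auto

lemma affine_props:
  fixes L :: "real^'n^'n"
  assumes "invertible L"
  shows "(\<lambda>y. L *v y + t) \<in> lebesgue \<rightarrow>\<^sub>M lebesgue"
    and "\<exists>c\<ge>0. distr lebesgue lebesgue (\<lambda>y. L *v y + t) = density lebesgue (\<lambda>_. ennreal c)"
proof -
  define Li where "Li = matrix_inv L"
  have LLi: "L ** Li = mat 1" "Li ** L = mat 1" using invertible_inv[OF assms] by (auto simp: Li_def)
  obtain c where c: "c \<ge> 0" "\<forall>S\<in>sets lebesgue. (*v) Li ` S \<in> sets lebesgue \<and> emeasure lebesgue ((*v) Li ` S) = ennreal c * emeasure lebesgue S"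
    using lin_image_emeasure[of "(*v) Li"] by auto
  have vim: "(\<lambda>y. L *v y + t) -` A = (\<lambda>x. (- (Li *v t)) + x) ` ((*v) Li ` A)" for A
  proof (intro set_eqI iffI)
    fix y assume "y \<in> (\<lambda>y. L *v y + t) -` A"
    then have "L *v y + t \<in> A" by simp
    moreover have "y = - (Li *v t) + Li *v (L *v y + t)"
      by (simp add: matrix_vector_right_distrib matrix_vector_mul_assoc LLi)
    ultimately show "y \<in> (\<lambda>x. (- (Li *v t)) + x) ` ((*v) Li ` A)" by blast
  next
    fix y assume "y \<in> (\<lambda>x. (- (Li *v t)) + x) ` ((*v) Li ` A)"
    then obtain a where a: "a \<in> A" "y = - (Li *v t) + Li *v a" by auto
    have "L *v y + t = a"
      by (simp add: a matrix_vector_right_distrib matrix_vector_mult_diff_distrib matrix_vector_mul_assoc LLi)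
    then show "y \<in> (\<lambda>y. L *v y + t) -` A" using a by simp
  qed
  have vims: "(\<lambda>y. L *v y + t) -` A \<in> sets lebesgue" and vime: "emeasure lebesgue ((\<lambda>y. L *v y + t) -` A) = ennreal c * emeasure lebesgue A"
    if A: "A \<in> sets lebesgue" for A
  proof -
    have "(*v) Li ` A \<in> sets lebesgue" using c A by auto
    then show "(\<lambda>y. L *v y + t) -` A \<in> sets lebesgue" unfolding vim by (rule lebesgue_sets_translation)
    have "emeasure lebesgue ((\<lambda>x. (- (Li *v t)) + x) ` ((*v) Li ` A)) = emeasure lebesgue ((*v) Li ` A)"
      using emeasure_lebesgue_affine[of 1 "- (Li *v t)" "(*v) Li ` A"] by (simp add: add.commute)
    then show "emeasure lebesgue ((\<lambda>y. L *v y + t) -` A) = ennreal c * emeasure lebesgue A"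
      unfolding vim using c A by auto
  qed
  show meas: "(\<lambda>y. L *v y + t) \<in> lebesgue \<rightarrow>\<^sub>M lebesgue"
    by (rule measurableI) (use vims in auto)
  show "\<exists>c\<ge>0. distr lebesgue lebesgue (\<lambda>y. L *v y + t) = density lebesgue (\<lambda>_. ennreal c)"
  proof (intro exI[of _ c] conjI)
    show "distr lebesgue lebesgue (\<lambda>y. L *v y + t) = density lebesgue (\<lambda>_. ennreal c)"
    proof (rule measure_eqI)
      show "sets (distr lebesgue lebesgue (\<lambda>y. L *v y + t)) = sets (density lebesgue (\<lambda>_. ennreal c))" by simp
      fix A assume "A \<in> sets (distr lebesgue lebesgue (\<lambda>y. L *v y + t))"
      then have A: "A \<in> sets lebesgue" by simp
      have "emeasure (distr lebesgue lebesgue (\<lambda>y. L *v y + t)) A = emeasure lebesgue ((\<lambda>y. L *v y + t) -` A)"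
        using emeasure_distr[OF meas A] by simp
      also have "\<dots> = ennreal c * emeasure lebesgue A" using vime[OF A] .
      also have "\<dots> = emeasure (density lebesgue (\<lambda>_. ennreal c)) A"
        using A by (simp add: emeasure_density nn_integral_cmult_indicator)
      finally show "emeasure (distr lebesgue lebesgue (\<lambda>y. L *v y + t)) A = emeasure (density lebesgue (\<lambda>_. ennreal c)) A" .
    qed
  qed (rule c(1))
qed

lemma affine_integrable:
  fixes L :: "real^'n^'n" and \<phi> :: "real^'n \<Rightarrow> real"
  assumes "invertible L" "integrable lebesgue \<phi>"
  shows "integrable lebesgue (\<lambda>y. \<phi> (L *v y + t))"
proof -
  obtain c where c: "c \<ge> 0" "distr lebesgue lebesgue (\<lambda>y. L *v y + t) = density lebesgue (\<lambda>_. ennreal c)"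
    using affine_props(2)[OF assms(1), of t] by blast
  have m: "\<phi> \<in> borel_measurable lebesgue" using assms(2) by auto
  have "integrable (density lebesgue (\<lambda>_. ennreal c)) \<phi>"
    using integrable_density[of \<phi> lebesgue "\<lambda>_. c"] m c(1) assms(2) by auto
  then have "integrable (distr lebesgue lebesgue (\<lambda>y. L *v y + t)) \<phi>" using c(2) by simp
  then show ?thesis using integrable_distr_eq[OF affine_props(1)[OF assms(1)] m] by simp
qed

lemma affine_AE:
  fixes L :: "real^'n^'n"
  assumes "invertible L" "AE x in lebesgue. Q x"
  shows "AE y in lebesgue. Q (L *v y + t)"
proof -
  obtain c where c: "c \<ge> 0" "distr lebesgue lebesgue (\<lambda>y. L *v y + t) = density lebesgue (\<lambda>_. ennreal c)"
    using affine_props(2)[OF assms(1), of t] by blast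
  have meas: "(\<lambda>y. L *v y + t) \<in> lebesgue \<rightarrow>\<^sub>M lebesgue" by (rule affine_props(1)[OF assms(1)])
  from assms(2) obtain N where N: "{x \<in> space lebesgue. \<not> Q x} \<subseteq> N" "N \<in> null_sets lebesgue"
    unfolding eventually_ae_filter by auto
  have NS: "N \<in> sets lebesgue" using N by auto
  have s: "(\<lambda>y. L *v y + t) -` N \<in> sets lebesgue"
    using measurable_sets[OF meas NS] by simp
  have "emeasure lebesgue ((\<lambda>y. L *v y + t) -` N) = emeasure (distr lebesgue lebesgue (\<lambda>y. L *v y + t)) N"
    using emeasure_distr[OF meas NS] by simp
  also have "\<dots> = ennreal c * emeasure lebesgue N"
    unfolding c(2) using NS by (simp add: emeasure_density nn_integral_cmult_indicator)
  also have "\<dots> = 0" using N by auto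
  finally have "(\<lambda>y. L *v y + t) -` N \<in> null_sets lebesgue" using s by auto
  then show ?thesis by (rule AE_I') (use N in auto)
qed



definition ee :: "real \<Rightarrow> complex" where
  "ee t = exp (2 * pi * \<i> * complex_of_real t)"

lemma ee_add: "ee (a + b) = ee a * ee b"
  unfolding ee_def by (simp add: distrib_left exp_add)

lemma ee_cnj: "cnj (ee a) = ee (- a)"
  unfolding ee_def by (simp add: exp_cnj)

lemma ee_int: assumes "t \<in> \<int>" shows "ee t = 1"
proof -
  obtain k where k: "t = of_int k" using assms Ints_cases by blast
  show ?thesis unfolding ee_def exp_eq_1 k
    by (intro conjI exI[of _ k]) simp_all
qed

lemma ee_one_imp: assumes "ee t = 1" shows "t \<in> \<int>"
proof -
  from assms obtain n :: int where "Im (2 * pi * \<i> * complex_of_real t) = of_int (2 * n) * pi"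
    unfolding ee_def exp_eq_1 by blast
  then have "2 * pi * t = 2 * of_int n * pi" by simp
  then have "t = of_int n" by simp
  then show ?thesis by simp
qed

lemma ee_diff_int: assumes "a - b \<in> \<int>" shows "ee a = ee b"
proof -
  have "ee a = ee (a - b) * ee b" using ee_add[of "a - b" b] by simp
  then show ?thesis using ee_int[OF assms] by simp
qed

lemma Zd_0: "0 \<in> Zd" by (simp add: Zd_def)
lemma Zd_add: "x \<in> Zd \<Longrightarrow> y \<in> Zd \<Longrightarrow> x + y \<in> Zd" by (auto simp: Zd_def)
lemma Zd_diff: "x \<in> Zd \<Longrightarrow> y \<in> Zd \<Longrightarrow> x - y \<in> Zd" by (auto simp: Zd_def)
lemma Zd_axis: "axis i 1 \<in> Zd" by (auto simp: Zd_def axis_def)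
lemma Zd_inner: "x \<in> Zd \<Longrightarrow> y \<in> Zd \<Longrightarrow> x \<bullet> y \<in> \<int>"
  unfolding Zd_def inner_vec_def by (auto intro!: Ints_sum Ints_mult)

lemma mat_inner: "(Q *v z) \<bullet> w = z \<bullet> (transpose Q *v (w::real^'n))"
  using dot_lmul_matrix[of z "transpose Q" w] by simp

lemma char_sum:
  fixes Q :: "real^'d^'d" and \<theta> :: "nat \<Rightarrow> real^'d"
  assumes inv: "invertible Q" and reps: "complete_reps {x. Q *v x \<in> Zd} p \<theta>"
    and eta: "transpose Q *v \<eta> \<in> Zd"
  shows "(\<Sum>r<p. ee ((Q *v \<theta> r) \<bullet> \<eta>)) = (if \<eta> \<in> Zd then of_nat p else 0)"
proof (cases "\<eta> \<in> Zd")
  case True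
  have "ee ((Q *v \<theta> r) \<bullet> \<eta>) = 1" if "r < p" for r
    using reps that True by (intro ee_int Zd_inner) (auto simp: complete_reps_def)
  then show ?thesis using True by simp
next
  case False
  then obtain i where i: "\<eta> $ i \<notin> \<int>" unfolding Zd_def by auto
  define \<theta>0 where "\<theta>0 = matrix_inv Q *v axis i 1"
  have Q0: "Q *v \<theta>0 = axis i 1"
    unfolding \<theta>0_def by (simp add: matrix_vector_mul_assoc invertible_inv[OF inv])
  have key: "ee ((Q *v x) \<bullet> \<eta>) = ee ((Q *v y) \<bullet> \<eta>)" if "x - y \<in> Zd" for x y
  proof (rule ee_diff_int)
    have "(Q *v x) \<bullet> \<eta> - (Q *v y) \<bullet> \<eta> = (x - y) \<bullet> (transpose Q *v \<eta>)"
      by (simp add: mat_inner inner_diff_left)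
    then show "(Q *v x) \<bullet> \<eta> - (Q *v y) \<bullet> \<eta> \<in> \<int>" using Zd_inner[OF that eta] by simp
  qed
  have ex: "\<exists>!s. s < p \<and> \<theta> r + \<theta>0 - \<theta> s \<in> Zd" if "r < p" for r
  proof -
    have "Q *v (\<theta> r + \<theta>0) \<in> Zd"
      using reps that by (auto simp: complete_reps_def matrix_vector_right_distrib Q0 intro!: Zd_add Zd_axis)
    then show ?thesis using reps unfolding complete_reps_def by blast
  qed
  define \<sigma> where "\<sigma> r = (THE s. s < p \<and> \<theta> r + \<theta>0 - \<theta> s \<in> Zd)" for r
  have \<sigma>: "\<sigma> r < p" "\<theta> r + \<theta>0 - \<theta> (\<sigma> r) \<in> Zd" if "r < p" for r
    using theI'[OF ex[OF that]] unfolding \<sigma>_def by auto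
  have inj: "inj_on \<sigma> {..<p}"
  proof (rule inj_onI)
    fix r r' assume r: "r \<in> {..<p}" and r': "r' \<in> {..<p}" and eq: "\<sigma> r = \<sigma> r'"
    have "(\<theta> r + \<theta>0 - \<theta> (\<sigma> r)) - (\<theta> r' + \<theta>0 - \<theta> (\<sigma> r')) \<in> Zd"
      by (rule Zd_diff) (use \<sigma> r r' in auto)
    then have d: "\<theta> r - \<theta> r' \<in> Zd" using eq by simp
    have "\<theta> r \<in> {x. Q *v x \<in> Zd}" using reps r by (auto simp: complete_reps_def)
    then have "\<exists>!s. s < p \<and> \<theta> r - \<theta> s \<in> Zd" using reps unfolding complete_reps_def by blast
    moreover have "r < p \<and> \<theta> r - \<theta> r \<in> Zd" using r by (simp add: Zd_0)
    moreover have "r' < p \<and> \<theta> r - \<theta> r' \<in> Zd" using r' d by simp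
    ultimately show "r = r'" by blast
  qed
  have img: "\<sigma> ` {..<p} = {..<p}"
    by (rule endo_inj_surj) (use \<sigma> inj in auto)
  define S where "S = (\<Sum>r<p. ee ((Q *v \<theta> r) \<bullet> \<eta>))"
  have "S = (\<Sum>r\<in>\<sigma> ` {..<p}. ee ((Q *v \<theta> r) \<bullet> \<eta>))" unfolding S_def img ..
  also have "\<dots> = (\<Sum>r<p. ee ((Q *v \<theta> (\<sigma> r)) \<bullet> \<eta>))"
    by (simp add: sum.reindex[OF inj])
  also have "\<dots> = (\<Sum>r<p. ee ((Q *v (\<theta> r + \<theta>0)) \<bullet> \<eta>))"
    by (rule sum.cong[OF refl], rule sym, rule key, rule \<sigma>(2)) simp
  also have "\<dots> = (\<Sum>r<p. ee ((Q *v \<theta> r) \<bullet> \<eta>) * ee (\<eta> $ i))"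
    by (simp add: matrix_vector_right_distrib inner_add_left ee_add Q0 inner_axis')
  also have "\<dots> = S * ee (\<eta> $ i)" unfolding S_def by (simp add: sum_distrib_right)
  finally have "S * (ee (\<eta> $ i) - 1) = 0" by (simp add: algebra_simps)
  moreover have "ee (\<eta> $ i) \<noteq> 1" using ee_one_imp i by blast
  ultimately have "S = 0" by simp
  then show ?thesis using False unfolding S_def by simp
qed


lemma cmod_add_sq: "(cmod (a + b))\<^sup>2 \<le> 2 * (cmod a)\<^sup>2 + 2 * (cmod b)\<^sup>2"
proof -
  have "cmod (a + b) \<le> cmod a + cmod b" by (rule norm_triangle_ineq)
  then have "(cmod (a + b))\<^sup>2 \<le> (cmod a + cmod b)\<^sup>2" by (simp add: power_mono)
  also have "\<dots> \<le> 2 * (cmod a)\<^sup>2 + 2 * (cmod b)\<^sup>2"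
    using sum_squares_ge_zero[of "cmod a - cmod b" 0] by (simp add: power2_eq_square algebra_simps)
  finally show ?thesis .
qed

lemma L2_zero: "L2 (\<lambda>x. 0)"
  unfolding L2_def by simp

lemma L2_add: assumes "L2 f" "L2 g" shows "L2 (\<lambda>x. f x + g x)"
proof -
  have m: "f \<in> borel_measurable lebesgue" "g \<in> borel_measurable lebesgue"
    and i: "integrable lebesgue (\<lambda>x. (cmod (f x))\<^sup>2)" "integrable lebesgue (\<lambda>x. (cmod (g x))\<^sup>2)"
    using assms unfolding L2_def by auto
  have "integrable lebesgue (\<lambda>x. (cmod (f x + g x))\<^sup>2)"
  proof (rule Bochner_Integration.integrable_bound)
    show "integrable lebesgue (\<lambda>x. 2 * (cmod (f x))\<^sup>2 + 2 * (cmod (g x))\<^sup>2)"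
      using i by auto
    show "(\<lambda>x. (cmod (f x + g x))\<^sup>2) \<in> borel_measurable lebesgue" using m by measurable
    show "AE x in lebesgue. norm ((cmod (f x + g x))\<^sup>2) \<le> norm (2 * (cmod (f x))\<^sup>2 + 2 * (cmod (g x))\<^sup>2)"
      using cmod_add_sq by auto
  qed
  then show ?thesis using m unfolding L2_def by auto
qed

lemma L2_cmult: assumes "L2 f" shows "L2 (\<lambda>x. c * f x)"
  using assms unfolding L2_def by (auto simp: norm_mult power_mult_distrib)

lemma L2_sum:
  fixes n :: nat and h :: "nat \<Rightarrow> real^'n \<Rightarrow> complex"
  shows "(\<And>q. q < n \<Longrightarrow> L2 (h q)) \<Longrightarrow> L2 (\<lambda>x. \<Sum>q<n. h q x)"
proof (induction n)
  case 0 then show ?case by (simp add: L2_zero)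
next
  case (Suc n)
  then show ?case by (simp add: L2_add)
qed

lemma L2_affine:
  fixes L :: "real^'n^'n"
  assumes "invertible L" "L2 h"
  shows "L2 (\<lambda>y. h (L *v y + t))"
proof -
  have m: "h \<in> borel_measurable lebesgue" and i: "integrable lebesgue (\<lambda>x. (cmod (h x))\<^sup>2)"
    using assms(2) unfolding L2_def by auto
  have "(\<lambda>y. h (L *v y + t)) \<in> borel_measurable lebesgue"
    using measurable_compose[OF affine_props(1)[OF assms(1)] m] by simp
  moreover have "integrable lebesgue (\<lambda>y. (cmod (h (L *v y + t)))\<^sup>2)"
    using affine_integrable[OF assms(1) i] by simp
  ultimately show ?thesis unfolding L2_def by simp
qed

lemma sum_delta_mult:
  fixes c :: complex
  assumes "k < (n::nat)"
  shows "(\<Sum>i<n. (if i = k then c else 0) * h i) = c * h k"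
    and "(\<Sum>i<n. (if k = i then c else 0) * h i) = c * h k"
proof -
  have "(\<Sum>i<n. (if i = k then c else 0) * h i) = (\<Sum>i<n. if i = k then c * h i else 0)"
    by (rule sum.cong) auto
  then show "(\<Sum>i<n. (if i = k then c else 0) * h i) = c * h k" using assms by simp
  have "(\<Sum>i<n. (if k = i then c else 0) * h i) = (\<Sum>i<n. if k = i then c * h i else 0)"
    by (rule sum.cong) auto
  then show "(\<Sum>i<n. (if k = i then c else 0) * h i) = c * h k" using assms by simp
qed

theorem lemma4p2:
  fixes M P :: "real ^ 'd ^ 'd" and p :: nat
    and \<theta> \<theta>s :: "nat \<Rightarrow> real ^ 'd"
  assumes "int_mat M" and "eigenvalues_gt1 M"
    and "int_mat P" and "real p = \<bar>det P\<bar>" and "p \<noteq> 0"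
    and "admissible P M"
    and "complete_reps {x. P *v x \<in> Zd} p \<theta>"
    and "complete_reps {x. transpose P *v x \<in> Zd} p \<theta>s"
    and "inH p g"
  shows "\<exists>f. (\<forall>r<p. L2 (f r)) \<and> Heq p g (synth P p \<theta> \<theta>s f) \<and>
           (\<forall>f'. (\<forall>r<p. L2 (f' r)) \<and> Heq p g (synth P p \<theta> \<theta>s f') \<longrightarrow>
                 (\<forall>r<p. AE x in lebesgue. f r x = f' r x))"
proof -
  note reps = assms(7) and repss = assms(8)
  have detP: "det P \<noteq> 0" using assms(4,5) by auto
  have invP: "invertible P" using detP invertible_det_nz by blast
  have invPT: "invertible (transpose P)" using detP invertible_det_nz by (metis det_transpose)
  define Pi where "Pi = matrix_inv P"
  have PPi: "P ** Pi = mat 1" "Pi ** P = mat 1" using invertible_inv[OF invP] by (auto simp: Pi_def)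
  define A where "A q r = ee ((P *v \<theta> r) \<bullet> \<theta>s q)" for q r
  have synth_eq: "synth P p \<theta> \<theta>s f q x = (\<Sum>r<p. A q r * (1 / of_nat p * f r (Pi *v (x - P *v \<theta> r))))" for f q x
    unfolding synth_def Tprime_def Sprime_def transl_def A_def ee_def Pi_def by simp
  have orth1: "(\<Sum>r<p. A q r * cnj (A q' r)) = (if q = q' then of_nat p else 0)" if q: "q < p" "q' < p" for q q'
  proof -
    have "(\<Sum>r<p. A q r * cnj (A q' r)) = (\<Sum>r<p. ee ((P *v \<theta> r) \<bullet> (\<theta>s q - \<theta>s q')))"
      unfolding A_def by (simp add: ee_cnj ee_add[symmetric] inner_diff_right)
    also have "\<dots> = (if \<theta>s q - \<theta>s q' \<in> Zd then of_nat p else 0)"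
    proof (rule char_sum[OF invP reps])
      show "transpose P *v (\<theta>s q - \<theta>s q') \<in> Zd"
        using repss q by (auto simp: complete_reps_def matrix_vector_mult_diff_distrib intro!: Zd_diff)
    qed
    also have "(\<theta>s q - \<theta>s q' \<in> Zd) = (q = q')"
    proof
      assume d: "\<theta>s q - \<theta>s q' \<in> Zd"
      have "\<theta>s q \<in> {x. transpose P *v x \<in> Zd}" using repss q by (auto simp: complete_reps_def)
      then have "\<exists>!s. s < p \<and> \<theta>s q - \<theta>s s \<in> Zd" using repss unfolding complete_reps_def by blast
      moreover have "q < p \<and> \<theta>s q - \<theta>s q \<in> Zd" using q by (simp add: Zd_0)
      ultimately show "q = q'" using d q by blast
    qed (simp add: Zd_0)
    finally show ?thesis .
  qed
  have orth2: "(\<Sum>q<p. cnj (A q r') * A q r) = (if r = r' then of_nat p else 0)" if r: "r < p" "r' < p" for r r'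
  proof -
    have "(\<Sum>q<p. cnj (A q r') * A q r) = (\<Sum>q<p. ee ((transpose P *v \<theta>s q) \<bullet> (\<theta> r - \<theta> r')))"
    proof (rule sum.cong[OF refl])
      fix q
      have "(transpose P *v \<theta>s q) \<bullet> (\<theta> r - \<theta> r') = (P *v \<theta> r) \<bullet> \<theta>s q - (P *v \<theta> r') \<bullet> \<theta>s q"
      proof -
        have "(transpose P *v \<theta>s q) \<bullet> (\<theta> r - \<theta> r') = (P *v (\<theta> r - \<theta> r')) \<bullet> \<theta>s q"
          using mat_inner[of P "\<theta> r - \<theta> r'" "\<theta>s q"] by (metis inner_commute)
        also have "\<dots> = (P *v \<theta> r) \<bullet> \<theta>s q - (P *v \<theta> r') \<bullet> \<theta>s q"
          by (simp only: matrix_vector_mult_diff_distrib inner_diff_left)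
        finally show ?thesis .
      qed
      then show "cnj (A q r') * A q r = ee ((transpose P *v \<theta>s q) \<bullet> (\<theta> r - \<theta> r'))"
        unfolding A_def by (simp add: ee_cnj ee_add[symmetric])
    qed
    also have "\<dots> = (if \<theta> r - \<theta> r' \<in> Zd then of_nat p else 0)"
    proof (rule char_sum[OF invPT repss])
      show "transpose (transpose P) *v (\<theta> r - \<theta> r') \<in> Zd"
        using reps r by (auto simp: complete_reps_def matrix_vector_mult_diff_distrib intro!: Zd_diff)
    qed
    also have "(\<theta> r - \<theta> r' \<in> Zd) = (r = r')"
    proof
      assume d: "\<theta> r - \<theta> r' \<in> Zd"
      have "\<theta> r \<in> {x. P *v x \<in> Zd}" using reps r by (auto simp: complete_reps_def)
      then have "\<exists>!s. s < p \<and> \<theta> r - \<theta> s \<in> Zd" using reps unfolding complete_reps_def by blast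
      moreover have "r < p \<and> \<theta> r - \<theta> r \<in> Zd" using r by (simp add: Zd_0)
      ultimately show "r = r'" using d r by blast
    qed (simp add: Zd_0)
    finally show ?thesis .
  qed
  have bk1: "P *v (Pi *v (x - P *v \<theta> r)) + P *v \<theta> r = x" for x r
    by (simp add: matrix_vector_mul_assoc PPi)
  have bk2: "Pi *v (P *v y + P *v \<theta> r - P *v \<theta> r) = y" for y r
    by (simp add: matrix_vector_mul_assoc PPi)
  define f where "f r y = (\<Sum>q<p. cnj (A q r) * g q (P *v y + P *v \<theta> r))" for r y
  have L2f: "L2 (f r)" if "r < p" for r
    unfolding f_def
  proof (rule L2_sum, rule L2_cmult, rule L2_affine[OF invP])
    fix q assume "q < p" then show "L2 (g q)" using assms(9) unfolding inH_def by auto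
  qed
  have fx: "f r (Pi *v (x - P *v \<theta> r)) = (\<Sum>q<p. cnj (A q r) * g q x)" for r x
    unfolding f_def bk1 ..
  have synth_f: "synth P p \<theta> \<theta>s f q x = g q x" if q: "q < p" for q x
  proof -
    have "synth P p \<theta> \<theta>s f q x = (\<Sum>r<p. A q r * (1 / of_nat p * (\<Sum>q'<p. cnj (A q' r) * g q' x)))"
      unfolding synth_eq fx ..
    also have "\<dots> = (\<Sum>r<p. \<Sum>q'<p. 1 / of_nat p * (A q r * cnj (A q' r) * g q' x))"
      by (simp add: sum_distrib_left mult.assoc mult.left_commute)
    also have "\<dots> = (\<Sum>q'<p. \<Sum>r<p. 1 / of_nat p * (A q r * cnj (A q' r) * g q' x))"
      by (rule sum.swap)
    also have "\<dots> = 1 / of_nat p * (\<Sum>q'<p. (\<Sum>r<p. A q r * cnj (A q' r)) * g q' x)"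
      by (simp add: sum_distrib_left sum_distrib_right)
    also have "\<dots> = 1 / of_nat p * (\<Sum>q'<p. (if q = q' then of_nat p else 0) * g q' x)"
      using orth1 q by simp
    also have "\<dots> = g q x" using q assms(5) by (simp add: sum_delta_mult)
    finally show ?thesis .
  qed
  show ?thesis
  proof (rule exI[of _ f], intro conjI)
    show "\<forall>r<p. L2 (f r)" using L2f by blast
    show "Heq p g (synth P p \<theta> \<theta>s f)" unfolding Heq_def using synth_f by simp
    show "\<forall>f'. (\<forall>r<p. L2 (f' r)) \<and> Heq p g (synth P p \<theta> \<theta>s f') \<longrightarrow> (\<forall>r<p. AE x in lebesgue. f r x = f' r x)"
    proof (intro allI impI)
      fix f' r0 assume f': "(\<forall>r<p. L2 (f' r)) \<and> Heq p g (synth P p \<theta> \<theta>s f')" and r0: "r0 < p"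
      have "AE x in lebesgue. \<forall>q\<in>{..<p}. g q x = synth P p \<theta> \<theta>s f' q x"
        using f' unfolding Heq_def by (intro eventually_ball_finite) auto
      then have "AE x in lebesgue. (\<Sum>q<p. cnj (A q r0) * g q x) = f' r0 (Pi *v (x - P *v \<theta> r0))"
      proof (rule AE_mp, intro AE_I2 impI)
        fix x assume h: "\<forall>q\<in>{..<p}. g q x = synth P p \<theta> \<theta>s f' q x"
        have "(\<Sum>q<p. cnj (A q r0) * g q x) = (\<Sum>q<p. cnj (A q r0) * synth P p \<theta> \<theta>s f' q x)"
          using h by simp
        also have "\<dots> = (\<Sum>r<p. (\<Sum>q<p. cnj (A q r0) * A q r) * (1 / of_nat p * f' r (Pi *v (x - P *v \<theta> r))))"
        proof -
          have "(\<Sum>q<p. cnj (A q r0) * synth P p \<theta> \<theta>s f' q x)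
              = (\<Sum>q<p. \<Sum>r<p. cnj (A q r0) * A q r * (1 / of_nat p * f' r (Pi *v (x - P *v \<theta> r))))"
            unfolding synth_eq by (simp add: sum_distrib_left mult.assoc)
          also have "\<dots> = (\<Sum>r<p. \<Sum>q<p. cnj (A q r0) * A q r * (1 / of_nat p * f' r (Pi *v (x - P *v \<theta> r))))"
            by (rule sum.swap)
          also have "\<dots> = (\<Sum>r<p. (\<Sum>q<p. cnj (A q r0) * A q r) * (1 / of_nat p * f' r (Pi *v (x - P *v \<theta> r))))"
            by (simp add: sum_distrib_right sum_divide_distrib)
          finally show ?thesis .
        qed
        also have "\<dots> = (\<Sum>r<p. (if r = r0 then of_nat p else 0) * (1 / of_nat p * f' r (Pi *v (x - P *v \<theta> r))))"
          using orth2 r0 by simp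
        also have "\<dots> = f' r0 (Pi *v (x - P *v \<theta> r0))" by (simp only: sum_delta_mult(1)[OF r0]) (use assms(5) in simp)
        finally show "(\<Sum>q<p. cnj (A q r0) * g q x) = f' r0 (Pi *v (x - P *v \<theta> r0))" .
      qed
      from affine_AE[OF invP this, of "P *v \<theta> r0"]
      show "AE x in lebesgue. f r0 x = f' r0 x"
        unfolding f_def bk2 .
    qed
  qed
qed

end
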